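(* Let $G=(V,E)$ be a graph with no isolated vertices, $m\ge1$ edges, and exactly $L$ vertices of degree $1$. Let $\mathcal{L}$ be the partition produced by the Following algorithm with parameter $d_0=1$ (described in the context). Then $$Q(\mathcal{L})\ \ge\ \frac{L}{2m}-\frac{\sum_{i=1}^n d_i^2}{m^2}.$$
   Context: $G=(V,E)$ is an undirected simple graph, $V=\{1,\dots,n\}$, $m=|E|\ge1$, adjacency matrix $A$, degrees $d_i$. For a partition $\mathcal{C}$ of $V$ into nonempty communities, its modularity is $Q(\mathcal{C})=\frac{1}{2m}\sum_{i,j}\left(A_{i,j}-\frac{d_id_j}{2m}\right)\delta_{i,j}$, the sum over all ordered pairs $(i,j)$ including $i=j$, where $\delta_{i,j}=1$ if $i,j$ lie in the same community and $0$ otherwise. Following algorithm with parameter $d_0=1$: start with all vertices unlabeled; process vertices in non-decreasing order of degree; for each vertex $v$ that is still unlabeled when processed and has $d_v\le 1$, let $u$ be a neighbor of $v$ not labeled "follower" (if several, one of minimum degree) and set $v$ to follow $u$, labeling $v$ "follower" and $u$ "followee"; after this pass, label every still-unlabeled vertex "followee"; finally, form one community for each followee, consisting of the followee together with all vertices that follow it. *)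

theory Defs
  imports Complex_Main
begin

definition simple_graph :: "nat \<Rightarrow> (nat \<Rightarrow> nat \<Rightarrow> bool) \<Rightarrow> bool" where
  "simple_graph n E \<longleftrightarrow>
     (\<forall>i j. E i j \<longrightarrow> i \<in> {1..n} \<and> j \<in> {1..n}) \<and>
     (\<forall>i j. E i j \<longrightarrow> E j i) \<and> (\<forall>i. \<not> E i i)"

definition adjm :: "(nat \<Rightarrow> nat \<Rightarrow> bool) \<Rightarrow> nat \<Rightarrow> nat \<Rightarrow> real" where
  "adjm E i j = (if E i j then 1 else 0)"

definition deg :: "nat \<Rightarrow> (nat \<Rightarrow> nat \<Rightarrow> bool) \<Rightarrow> nat \<Rightarrow> nat" where
  "deg n E i = card {j \<in> {1..n}. E i j}"

definition edges :: "nat \<Rightarrow> (nat \<Rightarrow> nat \<Rightarrow> bool) \<Rightarrow> nat set set" where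
  "edges n E = {{i, j} | i j. i \<in> {1..n} \<and> j \<in> {1..n} \<and> E i j}"

definition num_edges :: "nat \<Rightarrow> (nat \<Rightarrow> nat \<Rightarrow> bool) \<Rightarrow> nat" where
  "num_edges n E = card (edges n E)"

text \<open>Modularity of a partition C (a set of communities) of {1..n}; the sum runs over all
  ordered pairs (i,j), including i = j.\<close>

definition modularity :: "nat \<Rightarrow> (nat \<Rightarrow> nat \<Rightarrow> bool) \<Rightarrow> nat set set \<Rightarrow> real" where
  "modularity n E C =
     (let m = real (num_edges n E) in
      (1 / (2 * m)) * (\<Sum>i\<in>{1..n}. \<Sum>j\<in>{1..n}.
         (adjm E i j - real (deg n E i) * real (deg n E j) / (2 * m)) *
         (if \<exists>c\<in>C. i \<in> c \<and> j \<in> c then 1 else 0)))"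

text \<open>The Following algorithm with parameter d0 = 1.\<close>

datatype label = Unlabeled | Follower | Followee

type_synonym fstate = "(nat \<Rightarrow> label) \<times> (nat \<Rightarrow> nat)"

text \<open>Processing a single vertex v. The choice of u among the admissible neighbours of
  minimum degree is nondeterministic.\<close>

inductive fol_step :: "nat \<Rightarrow> (nat \<Rightarrow> nat \<Rightarrow> bool) \<Rightarrow> fstate \<Rightarrow> nat \<Rightarrow> fstate \<Rightarrow> bool"
  for n E where
  skip: "\<not> (lab v = Unlabeled \<and> deg n E v \<le> 1 \<and> (\<exists>u. E v u \<and> lab u \<noteq> Follower))
         \<Longrightarrow> fol_step n E (lab, f) v (lab, f)"
| follow: "lab v = Unlabeled \<Longrightarrow> deg n E v \<le> 1 \<Longrightarrow> E v u \<Longrightarrow> lab u \<noteq> Follower \<Longrightarrow>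
         (\<forall>w. E v w \<and> lab w \<noteq> Follower \<longrightarrow> deg n E u \<le> deg n E w) \<Longrightarrow>
         fol_step n E (lab, f) v (lab(v := Follower, u := Followee), f(v := u))"

inductive fol_run :: "nat \<Rightarrow> (nat \<Rightarrow> nat \<Rightarrow> bool) \<Rightarrow> fstate \<Rightarrow> nat list \<Rightarrow> fstate \<Rightarrow> bool"
  for n E where
  nil: "fol_run n E s [] s"
| cons: "fol_step n E s v s' \<Longrightarrow> fol_run n E s' vs s'' \<Longrightarrow> fol_run n E s (v # vs) s''"

definition degree_order :: "nat \<Rightarrow> (nat \<Rightarrow> nat \<Rightarrow> bool) \<Rightarrow> nat list \<Rightarrow> bool" where
  "degree_order n E vs \<longleftrightarrow> distinct vs \<and> set vs = {1..n} \<and> sorted (map (deg n E) vs)"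

definition following_partition :: "nat \<Rightarrow> fstate \<Rightarrow> nat set set" where
  "following_partition n s =
     (let lab' = (\<lambda>v. if fst s v = Unlabeled then Followee else fst s v) in
      (\<lambda>u. {u} \<union> {v \<in> {1..n}. lab' v = Follower \<and> snd s v = u}) ` {u \<in> {1..n}. lab' u = Followee})"

definition following_output :: "nat \<Rightarrow> (nat \<Rightarrow> nat \<Rightarrow> bool) \<Rightarrow> nat set set \<Rightarrow> bool" where
  "following_output n E C \<longleftrightarrow>
     (\<exists>vs s f0. degree_order n E vs \<and> fol_run n E (\<lambda>_. Unlabeled, f0) vs s \<and>
                C = following_partition n s)"

end

theory Submission
  imports Defs
begin

definition finv :: "nat \<Rightarrow> (nat \<Rightarrow> nat \<Rightarrow> bool) \<Rightarrow> fstate \<Rightarrow> bool" where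
  "finv n E s \<longleftrightarrow> (\<forall>v. fst s v = Follower \<longrightarrow> E v (snd s v) \<and> deg n E v \<le> 1 \<and> fst s (snd s v) = Followee)
     \<and> (\<forall>u. fst s u = Followee \<longrightarrow> (\<exists>v. fst s v = Follower \<and> snd s v = u))"

lemma leaf_nbr:
  assumes "simple_graph n E" "deg n E u \<le> 1" "E u a" "E u b"
  shows "a = b"
proof -
  have "a \<in> {j \<in> {1..n}. E u j}" "b \<in> {j \<in> {1..n}. E u j}"
    using assms unfolding simple_graph_def by auto
  moreover have "card {j \<in> {1..n}. E u j} \<le> 1" using assms(2) unfolding deg_def .
  moreover have "finite {j \<in> {1..n}. E u j}" by simp
  ultimately show ?thesis using card_le_Suc0_iff_eq[of "{j \<in> {1..n}. E u j}"] by auto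
qed

lemma deg1_nbr:
  assumes "deg n E v = 1" shows "\<exists>u. E v u"
proof -
  have "card {j \<in> {1..n}. E v j} = 1" using assms unfolding deg_def .
  then obtain x where "{j \<in> {1..n}. E v j} = {x}" using card_1_singletonE by blast
  then show ?thesis by auto
qed

lemma step_inv:
  assumes "fol_step n E s v s'" "simple_graph n E" "finv n E s"
  shows "finv n E s' \<and> (\<forall>w. fst s w \<noteq> Unlabeled \<longrightarrow> fst s' w \<noteq> Unlabeled)
         \<and> (deg n E v = 1 \<longrightarrow> fst s' v \<noteq> Unlabeled)"
  using assms(1)
proof cases
  case (skip lab f)
  have "deg n E v = 1 \<longrightarrow> lab v \<noteq> Unlabeled"
  proof
    assume d: "deg n E v = 1"
    show "lab v \<noteq> Unlabeled"
    proof
      assume U: "lab v = Unlabeled"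
      obtain u where u: "E v u" using deg1_nbr[OF d] by blast
      have "lab u = Follower" using skip(3) U d u by auto
      then have "E u (f u)" "deg n E u \<le> 1" "lab (f u) = Followee"
        using assms(3) skip(1) unfolding finv_def by auto
      moreover have "E u v" using u assms(2) unfolding simple_graph_def by auto
      ultimately have "f u = v" using leaf_nbr[OF assms(2)] by blast
      with \<open>lab (f u) = Followee\<close> U show False by simp
    qed
  qed
  then show ?thesis using skip assms(3) by simp
next
  case (follow lab u f)
  have uv: "u \<noteq> v" using follow(5) assms(2) unfolding simple_graph_def by auto
  have I1: "\<forall>w. lab w = Follower \<longrightarrow> E w (f w) \<and> deg n E w \<le> 1 \<and> lab (f w) = Followee"
    and I2: "\<forall>w. lab w = Followee \<longrightarrow> (\<exists>x. lab x = Follower \<and> f x = w)"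
    using assms(3) follow(1) unfolding finv_def by auto
  let ?l = "lab(v := Follower, u := Followee)"
  let ?f = "f(v := u)"
  have A: "\<forall>w. ?l w = Follower \<longrightarrow> E w (?f w) \<and> deg n E w \<le> 1 \<and> ?l (?f w) = Followee"
  proof (intro allI impI)
    fix w assume w: "?l w = Follower"
    show "E w (?f w) \<and> deg n E w \<le> 1 \<and> ?l (?f w) = Followee"
    proof (cases "w = v")
      case True then show ?thesis using follow uv by auto
    next
      case False
      then have "w \<noteq> u" "lab w = Follower" using w by (auto split: if_splits)
      then have "E w (f w)" "deg n E w \<le> 1" "lab (f w) = Followee" using I1 by auto
      moreover have "f w \<noteq> v" using \<open>lab (f w) = Followee\<close> follow(3) by auto
      ultimately show ?thesis using False by auto
    qed
  qed
  have B: "\<forall>w. ?l w = Followee \<longrightarrow> (\<exists>x. ?l x = Follower \<and> ?f x = w)"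
  proof (intro allI impI)
    fix w assume w: "?l w = Followee"
    show "\<exists>x. ?l x = Follower \<and> ?f x = w"
    proof (cases "w = u")
      case True then show ?thesis using uv by (intro exI[of _ v]) auto
    next
      case False
      then have "w \<noteq> v" "lab w = Followee" using w by (auto split: if_splits)
      then obtain x where x: "lab x = Follower" "f x = w" using I2 by auto
      have "x \<noteq> v" "x \<noteq> u" using x follow(3) follow(6) by auto
      then show ?thesis using x by (intro exI[of _ x]) auto
    qed
  qed
  show ?thesis using A B follow uv unfolding finv_def by auto
qed

lemma run_inv:
  assumes "fol_run n E s vs s'" "simple_graph n E" "finv n E s"
  shows "finv n E s' \<and> (\<forall>w. fst s w \<noteq> Unlabeled \<longrightarrow> fst s' w \<noteq> Unlabeled)
         \<and> (\<forall>v\<in>set vs. deg n E v = 1 \<longrightarrow> fst s' v \<noteq> Unlabeled)"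
  using assms
proof (induction rule: fol_run.induct)
  case (nil s) then show ?case by simp
next
  case (cons s v s' vs s'')
  have "finv n E s' \<and> (\<forall>w. fst s w \<noteq> Unlabeled \<longrightarrow> fst s' w \<noteq> Unlabeled)
         \<and> (deg n E v = 1 \<longrightarrow> fst s' v \<noteq> Unlabeled)" using step_inv cons by blast
  then show ?case using cons by auto
qed

lemma label_third: "x \<noteq> Follower \<Longrightarrow> x \<noteq> Unlabeled \<Longrightarrow> x = Followee"
  by (cases x) auto

theorem mainTheorem6:
  fixes n :: nat and E :: "nat \<Rightarrow> nat \<Rightarrow> bool" and C :: "nat set set"
  assumes "simple_graph n E"
    and "\<forall>i\<in>{1..n}. deg n E i \<ge> 1"
    and "num_edges n E \<ge> 1"
    and "following_output n E C"
  shows "modularity n E C \<ge>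
           real (card {i \<in> {1..n}. deg n E i = 1}) / (2 * real (num_edges n E))
           - (\<Sum>i\<in>{1..n}. real (deg n E i) ^ 2) / real (num_edges n E) ^ 2"
proof -
  note sg = assms(1)
  obtain vs s f0 where vs: "degree_order n E vs" and run: "fol_run n E (\<lambda>_. Unlabeled, f0) vs s"
    and C: "C = following_partition n s" using assms(4) unfolding following_output_def by blast
  have "finv n E (\<lambda>_. Unlabeled, f0)" unfolding finv_def by auto
  from run_inv[OF run sg this] vs
  have inv: "finv n E s" and leafl: "\<forall>v\<in>{1..n}. deg n E v = 1 \<longrightarrow> fst s v \<noteq> Unlabeled"
    unfolding degree_order_def by auto
  define lab where "lab = fst s"
  define f where "f = snd s"
  have I1: "\<And>w. lab w = Follower \<Longrightarrow> E w (f w) \<and> deg n E w \<le> 1 \<and> lab (f w) = Followee"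
    and I2: "\<And>w. lab w = Followee \<Longrightarrow> (\<exists>x. lab x = Follower \<and> f x = w)"
    using inv unfolding finv_def lab_def f_def by auto
  have Ein: "\<And>i j. E i j \<Longrightarrow> i \<in> {1..n} \<and> j \<in> {1..n}" and Esym: "\<And>i j. E i j \<Longrightarrow> E j i"
    using sg unfolding simple_graph_def by auto
  define Fol where "Fol = {v \<in> {1..n}. lab v = Follower}"
  define Fee where "Fee = {u \<in> {1..n}. lab u \<noteq> Follower}"
  define comm where "comm u = {u} \<union> {v \<in> {1..n}. lab v = Follower \<and> f v = u}" for u
  have CC: "C = comm ` Fee"
    unfolding C following_partition_def Let_def comm_def Fee_def lab_def f_def
    by (rule image_cong) (auto split: if_splits intro: label_third)
  define m where "m = real (num_edges n E)"
  have m1: "m \<ge> 1" using assms(3) unfolding m_def by simp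
  define d where "d i = real (deg n E i)" for i
  define A where "A = adjm E"
  define \<delta> where "\<delta> i j = (if \<exists>c\<in>C. i \<in> c \<and> j \<in> c then 1 else (0::real))" for i j
  define S where "S = (\<Sum>i\<in>{1..n}. d i ^ 2)"
  define F where "F = real (card Fol)"
  have finC: "finite C" using CC Fee_def by simp
  have Fu: "\<And>v. v \<in> Fol \<Longrightarrow> f v \<in> Fee \<and> A v (f v) = 1 \<and> \<delta> v (f v) = 1 \<and> \<delta> (f v) v = 1"
  proof -
    fix v assume v: "v \<in> Fol"
    then have l: "lab v = Follower" and vn: "v \<in> {1..n}" unfolding Fol_def by auto
    then have e: "E v (f v)" "lab (f v) = Followee" using I1 by auto
    have fe: "f v \<in> Fee" using e Ein unfolding Fee_def by auto
    have "v \<in> comm (f v)" "f v \<in> comm (f v)" using l vn unfolding comm_def by auto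
    moreover have "comm (f v) \<in> C" using CC fe by auto
    ultimately show "f v \<in> Fee \<and> A v (f v) = 1 \<and> \<delta> v (f v) = 1 \<and> \<delta> (f v) v = 1"
      using fe e unfolding A_def adjm_def \<delta>_def by auto
  qed
  define X where "X = (\<Sum>i\<in>{1..n}. \<Sum>j\<in>{1..n}. A i j * \<delta> i j)"
  define ind1 where "ind1 i j = (if i \<in> Fol \<and> j = f i then 1 else (0::real))" for i j
  have gge: "A i j * \<delta> i j \<ge> ind1 i j + ind1 j i" for i j
  proof -
    have "\<not> (i \<in> Fol \<and> j = f i \<and> j \<in> Fol \<and> i = f j)"
      using Fu unfolding Fee_def Fol_def by auto
    moreover have "A i j * \<delta> i j \<ge> 0" unfolding A_def adjm_def \<delta>_def by auto
    moreover have "i \<in> Fol \<and> j = f i \<Longrightarrow> A i j * \<delta> i j = 1" using Fu by auto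
    moreover have "j \<in> Fol \<and> i = f j \<Longrightarrow> A i j * \<delta> i j = 1"
    proof -
      assume h: "j \<in> Fol \<and> i = f j"
      then have "E j i" using I1 unfolding Fol_def by auto
      then have "A i j = 1" using Esym unfolding A_def adjm_def by auto
      then show ?thesis using Fu h by auto
    qed
    ultimately show ?thesis unfolding ind1_def by auto
  qed
  have sum1: "(\<Sum>i\<in>{1..n}. \<Sum>j\<in>{1..n}. ind1 i j) = F"
  proof -
    have "(\<Sum>j\<in>{1..n}. ind1 i j) = (if i \<in> Fol then 1 else 0)" if "i \<in> {1..n}" for i
    proof (cases "i \<in> Fol")
      case True
      then have "f i \<in> {1..n}" using Fu Fee_def by auto
      then have "(\<Sum>j\<in>{1..n}. ind1 i j) = (\<Sum>j\<in>{1..n}. if j = f i then 1 else 0)"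
        using True unfolding ind1_def by (intro sum.cong) auto
      also have "\<dots> = 1" using \<open>f i \<in> {1..n}\<close> by simp
      finally show ?thesis using True by simp
    qed (simp add: ind1_def)
    then have "(\<Sum>i\<in>{1..n}. \<Sum>j\<in>{1..n}. ind1 i j) = (\<Sum>i\<in>{1..n}. if i \<in> Fol then 1 else 0)"
      by (intro sum.cong) auto
    also have "\<dots> = F" unfolding F_def Fol_def by (simp add: sum.If_cases Int_def)
    finally show ?thesis .
  qed
  have sum2: "(\<Sum>i\<in>{1..n}. \<Sum>j\<in>{1..n}. ind1 j i) = F"
    using sum1 sum.swap[of "\<lambda>i j. ind1 j i" "{1..n}" "{1..n}"] by simp
  have X2F: "X \<ge> 2 * F"
  proof -
    have "X \<ge> (\<Sum>i\<in>{1..n}. \<Sum>j\<in>{1..n}. ind1 i j + ind1 j i)"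
      unfolding X_def by (intro sum_mono gge)
    then show ?thesis using sum1 sum2 by (simp add: sum.distrib)
  qed
  define Y where "Y = (\<Sum>i\<in>{1..n}. \<Sum>j\<in>{1..n}. d i * d j * \<delta> i j)"
  define ic where "ic (i::nat) c = (if i \<in> c then 1 else (0::real))" for i c
  have dnn: "d i \<ge> 0" for i unfolding d_def by simp
  have dle: "\<delta> i j \<le> (\<Sum>c\<in>C. ic i c * ic j c)" for i j
  proof (cases "\<exists>c\<in>C. i \<in> c \<and> j \<in> c")
    case True
    then obtain c where c: "c \<in> C" "i \<in> c" "j \<in> c" by blast
    have "ic i c * ic j c \<le> (\<Sum>c\<in>C. ic i c * ic j c)"
      by (rule member_le_sum) (use c finC in \<open>auto simp: ic_def\<close>)
    then show ?thesis using c True unfolding \<delta>_def ic_def by auto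
  next
    case False
    then show ?thesis unfolding \<delta>_def ic_def by (auto intro: sum_nonneg)
  qed
  have "Y \<le> (\<Sum>i\<in>{1..n}. \<Sum>j\<in>{1..n}. d i * d j * (\<Sum>c\<in>C. ic i c * ic j c))"
    unfolding Y_def by (intro sum_mono mult_left_mono dle) (auto simp: dnn)
  also have "\<dots> = (\<Sum>c\<in>C. (\<Sum>i\<in>{1..n}. d i * ic i c) ^ 2)"
  proof -
    have "(\<Sum>i\<in>{1..n}. \<Sum>j\<in>{1..n}. d i * d j * (\<Sum>c\<in>C. ic i c * ic j c))
       = (\<Sum>i\<in>{1..n}. \<Sum>j\<in>{1..n}. \<Sum>c\<in>C. (d i * ic i c) * (d j * ic j c))"
      by (intro sum.cong refl) (simp add: sum_distrib_left mult_ac)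
    also have "\<dots> = (\<Sum>i\<in>{1..n}. \<Sum>c\<in>C. \<Sum>j\<in>{1..n}. (d i * ic i c) * (d j * ic j c))"
      by (intro sum.cong refl) (rule sum.swap)
    also have "\<dots> = (\<Sum>c\<in>C. \<Sum>i\<in>{1..n}. \<Sum>j\<in>{1..n}. (d i * ic i c) * (d j * ic j c))"
      by (rule sum.swap)
    also have "\<dots> = (\<Sum>c\<in>C. (\<Sum>i\<in>{1..n}. d i * ic i c) ^ 2)"
      by (intro sum.cong refl) (simp only: power2_eq_square sum_product)
    finally show ?thesis .
  qed
  also have "\<dots> \<le> (\<Sum>u\<in>Fee. (\<Sum>i\<in>{1..n}. d i * ic i (comm u)) ^ 2)"
    unfolding CC using sum_image_le[of Fee "\<lambda>c. (\<Sum>i\<in>{1..n}. d i * ic i c) ^ 2" comm] by (auto simp: Fee_def o_def)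
  also have "\<dots> \<le> (\<Sum>u\<in>Fee. 4 * d u ^ 2)"
  proof (rule sum_mono)
    fix u assume u: "u \<in> Fee"
    define Fs where "Fs = {v \<in> {1..n}. lab v = Follower \<and> f v = u}"
    have uF: "u \<notin> Fs" using u unfolding Fs_def Fee_def by auto
    have cs: "comm u \<subseteq> {1..n}" using u unfolding comm_def Fee_def by auto
    have "(\<Sum>i\<in>{1..n}. d i * ic i (comm u)) = (\<Sum>i\<in>comm u. d i)"
    proof -
      have "(\<Sum>i\<in>{1..n}. d i * ic i (comm u)) = (\<Sum>i\<in>{1..n}. if i \<in> comm u then d i else 0)"
        unfolding ic_def by (intro sum.cong) auto
      also have "\<dots> = sum d ({1..n} \<inter> comm u)" by (simp add: sum.inter_restrict)
      also have "{1..n} \<inter> comm u = comm u" using cs by blast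
      finally show ?thesis .
    qed
    also have "\<dots> = d u + (\<Sum>i\<in>Fs. d i)"
      unfolding comm_def Fs_def[symmetric] using uF by (simp add: Fs_def)
    also have "(\<Sum>i\<in>Fs. d i) \<le> (\<Sum>i\<in>Fs. 1)"
    proof (rule sum_mono)
      fix i assume "i \<in> Fs" then have "deg n E i \<le> 1" using I1 unfolding Fs_def by auto
      then show "d i \<le> 1" unfolding d_def by simp
    qed
    also have "(\<Sum>i\<in>Fs. (1::real)) \<le> d u"
    proof -
      have "Fs \<subseteq> {j \<in> {1..n}. E u j}" using I1 Esym unfolding Fs_def by auto
      then have "card Fs \<le> deg n E u" unfolding deg_def by (intro card_mono) auto
      then show ?thesis unfolding d_def by simp
    qed
    finally have le: "(\<Sum>i\<in>{1..n}. d i * ic i (comm u)) \<le> 2 * d u" by simp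
    have "0 \<le> (\<Sum>i\<in>{1..n}. d i * ic i (comm u))" by (intro sum_nonneg) (auto simp: ic_def dnn)
    then have "(\<Sum>i\<in>{1..n}. d i * ic i (comm u)) ^ 2 \<le> (2 * d u) ^ 2"
      using le by (intro power_mono) auto
    then show "(\<Sum>i\<in>{1..n}. d i * ic i (comm u)) ^ 2 \<le> 4 * d u ^ 2" by (simp add: power_mult_distrib)
  qed
  also have "\<dots> \<le> 4 * S"
  proof -
    have "(\<Sum>u\<in>Fee. d u ^ 2) \<le> S" unfolding S_def
      by (rule sum_mono2) (auto simp: Fee_def)
    then show ?thesis by (simp add: sum_distrib_left[symmetric])
  qed
  finally have Y4S: "Y \<le> 4 * S" .
  define Lv where "Lv = {i \<in> {1..n}. deg n E i = 1}"
  define Ln where "Ln = {i \<in> Lv. lab i \<noteq> Follower}"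
  have "Lv \<subseteq> Fol \<union> Ln" unfolding Lv_def Ln_def Fol_def by auto
  then have "card Lv \<le> card Fol + card Ln"
  proof -
    have "finite (Fol \<union> Ln)" unfolding Fol_def Ln_def Lv_def by auto
    then have "card Lv \<le> card (Fol \<union> Ln)" using \<open>Lv \<subseteq> Fol \<union> Ln\<close> by (rule card_mono)
    also have "\<dots> \<le> card Fol + card Ln" by (rule card_Un_le)
    finally show ?thesis .
  qed
  moreover have "card Ln \<le> card Fol"
  proof -
    define g where "g w = (SOME x. lab x = Follower \<and> f x = w)" for w
    have gw: "lab (g w) = Follower \<and> f (g w) = w" if "w \<in> Ln" for w
    proof -
      have "lab w = Followee" using that leafl unfolding Ln_def Lv_def lab_def
        by (cases "fst s w") auto
      then have "\<exists>x. lab x = Follower \<and> f x = w" using I2 by auto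
      then show ?thesis unfolding g_def by (rule someI_ex)
    qed
    have "inj_on g Ln" by (rule inj_onI) (metis gw)
    moreover have "g ` Ln \<subseteq> Fol"
    proof
      fix x assume "x \<in> g ` Ln"
      then obtain w where "w \<in> Ln" "x = g w" by auto
      then have "lab x = Follower" using gw by auto
      then have "E x (f x)" using I1 by auto
      then show "x \<in> Fol" using Ein \<open>lab x = Follower\<close> unfolding Fol_def by auto
    qed
    moreover have "finite Fol" unfolding Fol_def by auto
    ultimately show ?thesis by (rule card_inj_on_le)
  qed
  ultimately have L2F: "real (card Lv) \<le> 2 * F" unfolding F_def by simp
  have mod_eq: "modularity n E C = (1 / (2 * m)) * (X - Y / (2 * m))"
  proof -
    have "(\<Sum>i\<in>{1..n}. \<Sum>j\<in>{1..n}. (A i j - d i * d j / (2 * m)) * \<delta> i j)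
          = (\<Sum>i\<in>{1..n}. \<Sum>j\<in>{1..n}. A i j * \<delta> i j - d i * d j * \<delta> i j / (2 * m))"
      by (simp add: algebra_simps)
    also have "\<dots> = X - Y / (2 * m)"
      unfolding X_def Y_def by (simp add: sum_subtractf sum_divide_distrib)
    finally show ?thesis unfolding modularity_def Let_def m_def[symmetric] d_def A_def \<delta>_def
      by simp
  qed
  have "(1 / (2 * m)) * (X - Y / (2 * m)) \<ge> (1 / (2 * m)) * (2 * F - 4 * S / (2 * m))"
  proof (rule mult_left_mono)
    have "Y / (2 * m) \<le> 4 * S / (2 * m)" using Y4S m1 by (intro divide_right_mono) auto
    then show "2 * F - 4 * S / (2 * m) \<le> X - Y / (2 * m)" using X2F by linarith
  qed (use m1 in auto)
  moreover have "(1 / (2 * m)) * (2 * F - 4 * S / (2 * m)) = F / m - S / m ^ 2"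
    using m1 by (simp add: field_simps power2_eq_square)
  moreover have "real (card Lv) / (2 * m) \<le> F / m" using L2F m1 by (simp add: field_simps)
  ultimately have "real (card Lv) / (2 * m) - S / m ^ 2 \<le> modularity n E C"
    using mod_eq by linarith
  then show ?thesis unfolding Lv_def m_def S_def d_def .
qed

end
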